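(* Let $\ell\ge1$, $N=2^\ell$, let ${\mathbf x}_0,\dots,{\mathbf x}_{\omega-1}\in\mathbb{F}_2^\ell$ be distinct, and $D=P_{{\mathbf x}_0}+\cdots+P_{{\mathbf x}_{\omega-1}}$. Let $R$ be the number of ordered pairs $\big((u,v,w),(u',v',w')\big)$ of triples of indices in $\{0,\dots,\omega-1\}$ with $u\ne v$, $v\ne w$, $u'\ne v'$, $v'\ne w'$, $u\ne u'$, $w\ne w'$, and ${\mathbf x}_u+{\mathbf x}_v+{\mathbf x}_w={\mathbf x}_{u'}+{\mathbf x}_{v'}+{\mathbf x}_{w'}$. Then the number of $6$-cycles in the Tanner graph of $D$ is $\mathcal{N}_6=\dfrac{2^\ell}{6}\,R$.
   Context: Rows and columns of $N\times N$ binary matrices are indexed by $\mathbb{F}_2^\ell$ via ${\mathbf x}=(x_1,\dots,x_\ell)\leftrightarrow 1+\sum_i x_i2^{i-1}$. For ${\mathbf a}\in\mathbb{F}_2^\ell$, $P_{\mathbf a}$ is the $N\times N$ binary matrix with $(P_{\mathbf a})_{{\mathbf x},{\mathbf y}}=1$ iff ${\mathbf y}={\mathbf x}+{\mathbf a}$. The Tanner graph of a binary matrix is the bipartite graph with check nodes = rows, variable nodes = columns, edges at the $1$-entries. A $k$-cycle is a closed walk of $k$ edges with distinct vertices and distinct edges. *)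

theory Defs
  imports Complex_Main
begin

text \<open>Vectors of F_2^l are encoded by their index: x = (x_1,...,x_l) corresponds to the
natural number sum x_i 2^(i-1) in {0..<2^l} (the paper's index minus 1); vector addition
is bitwise xor.  A binary N x N matrix is a function nat => nat => nat on {0..<N}^2.\<close>

definition perm_mat :: "nat \<Rightarrow> nat \<Rightarrow> nat \<Rightarrow> nat" where
  "perm_mat a x y = (if y = xor x a then 1 else 0)"

definition sum_perm_mat :: "(nat \<Rightarrow> nat) \<Rightarrow> nat \<Rightarrow> nat \<Rightarrow> nat \<Rightarrow> nat" where
  "sum_perm_mat xs \<omega> x y = (\<Sum>i<\<omega>. perm_mat (xs i) x y)"

text \<open>Tanner graph of an N x N matrix H: check nodes Inl r, variable nodes Inr c,
edge between Inl r and Inr c iff H r c = 1.\<close>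
definition tanner_adj :: "nat \<Rightarrow> (nat \<Rightarrow> nat \<Rightarrow> nat) \<Rightarrow> nat + nat \<Rightarrow> nat + nat \<Rightarrow> bool" where
  "tanner_adj N H a b =
     (case (a, b) of
        (Inl r, Inr c) \<Rightarrow> r < N \<and> c < N \<and> H r c = 1
      | (Inr c, Inl r) \<Rightarrow> r < N \<and> c < N \<and> H r c = 1
      | _ \<Rightarrow> False)"

definition cycle_edges :: "(nat + nat) list \<Rightarrow> (nat + nat) set list" where
  "cycle_edges vs = map (\<lambda>i. {vs ! i, vs ! ((i + 1) mod length vs)}) [0..<length vs]"

definition is_cycle_walk :: "nat \<Rightarrow> (nat \<Rightarrow> nat \<Rightarrow> nat) \<Rightarrow> nat \<Rightarrow> (nat + nat) list \<Rightarrow> bool" where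
  "is_cycle_walk N H k vs \<longleftrightarrow>
     length vs = k \<and> k > 0 \<and> distinct vs \<and> distinct (cycle_edges vs) \<and>
     (\<forall>i<k. tanner_adj N H (vs ! i) (vs ! ((i + 1) mod k)))"

text \<open>Number of k-cycles: number of distinct cycles (as subgraphs, i.e. edge sets),
so that a cycle is not counted separately per starting point / direction.\<close>
definition num_cycles :: "nat \<Rightarrow> (nat \<Rightarrow> nat \<Rightarrow> nat) \<Rightarrow> nat \<Rightarrow> nat" where
  "num_cycles N H k = card {set (cycle_edges vs) | vs. is_cycle_walk N H k vs}"

definition R_count :: "(nat \<Rightarrow> nat) \<Rightarrow> nat \<Rightarrow> nat" where
  "R_count xs \<omega> = card {((u, v, w), (u', v', w')).
      u < \<omega> \<and> v < \<omega> \<and> w < \<omega> \<and> u' < \<omega> \<and> v' < \<omega> \<and> w' < \<omega> \<and>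
      u \<noteq> v \<and> v \<noteq> w \<and> u' \<noteq> v' \<and> v' \<noteq> w' \<and> u \<noteq> u' \<and> w \<noteq> w' \<and>
      xor (xor (xs u) (xs v)) (xs w) = xor (xor (xs u') (xs v')) (xs w')}"

end

theory Submission
  imports Defs
begin

lemma dih1:
  assumes "distinct [a,b,c,d,e,f]" "distinct [a,b,c',d',e',f']"
   and "{{b,c'},{c',d'},{d',e'},{e',f'}} \<subseteq> {{a,b},{b,c},{c,d},{d,e},{e,f},{f,a}}"
  shows "[c',d',e',f'] = [c,d,e,f]"
proof -
  have c: "c' = c" using assms by (auto simp: doubleton_eq_iff)
  have d: "d' = d" using assms unfolding c by (auto simp: doubleton_eq_iff)
  have e: "e' = e" using assms unfolding c d by (auto simp: doubleton_eq_iff)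
  have f: "f' = f" using assms unfolding c d e by (auto simp: doubleton_eq_iff)
  show ?thesis using c d e f by simp
qed

lemma dih:
  assumes "distinct [a,b,c,d,e,f]" "distinct [a',b',c',d',e',f']"
   and "{{a',b'},{b',c'},{c',d'},{d',e'},{e',f'},{f',a'}} \<subseteq> {{a,b},{b,c},{c,d},{d,e},{e,f},{f,a}}"
  shows "[a',b',c',d',e',f'] \<in> {[a,b,c,d,e,f],[a,f,e,d,c,b],[b,c,d,e,f,a],[b,a,f,e,d,c],[c,d,e,f,a,b],[c,b,a,f,e,d],[d,e,f,a,b,c],[d,c,b,a,f,e],[e,f,a,b,c,d],[e,d,c,b,a,f],[f,a,b,c,d,e],[f,e,d,c,b,a]}"
proof -
  have key: "[a',b',c',d',e',f'] = [p,q,r,s,t,u]"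
    if "distinct [p,q,r,s,t,u]" "{{p,q},{q,r},{r,s},{s,t},{t,u},{u,p}} = {{a,b},{b,c},{c,d},{d,e},{e,f},{f,a}}" "a' = p" "b' = q" for p q r s t u
  proof -
    have sub: "{{b',c'},{c',d'},{d',e'},{e',f'}} \<subseteq> {{p,q},{q,r},{r,s},{s,t},{t,u},{u,p}}"
    proof -
      have "{{a',b'},{b',c'},{c',d'},{d',e'},{e',f'},{f',a'}} \<subseteq> {{p,q},{q,r},{r,s},{s,t},{t,u},{u,p}}"
        using assms(3) by (simp only: that(2))
      then show ?thesis by (simp only: insert_subset)
    qed
    have "[c',d',e',f'] = [r,s,t,u]"
      by (rule dih1[of p q r s t u c' d' e' f']) (use that assms(2) sub in simp_all)
    then show ?thesis using that(3,4) by simp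
  qed
  have k1: "[a',b',c',d',e',f'] \<in> {[a,b,c,d,e,f],[a,f,e,d,c,b],[b,c,d,e,f,a],[b,a,f,e,d,c],[c,d,e,f,a,b],[c,b,a,f,e,d],[d,e,f,a,b,c],[d,c,b,a,f,e],[e,f,a,b,c,d],[e,d,c,b,a,f],[f,a,b,c,d,e],[f,e,d,c,b,a]}" if "a' = a" "b' = b"
  proof -
    have "[a',b',c',d',e',f'] = [a,b,c,d,e,f]"
    proof (rule key)
      show "distinct [a,b,c,d,e,f]" using assms(1) by auto
      show "{{a,b},{b,c},{c,d},{d,e},{e,f},{f,a}} = {{a,b},{b,c},{c,d},{d,e},{e,f},{f,a}}" by (simp add: insert_commute)
    qed (use that in simp)+
    then show ?thesis by simp
  qed
  have k2: "[a',b',c',d',e',f'] \<in> {[a,b,c,d,e,f],[a,f,e,d,c,b],[b,c,d,e,f,a],[b,a,f,e,d,c],[c,d,e,f,a,b],[c,b,a,f,e,d],[d,e,f,a,b,c],[d,c,b,a,f,e],[e,f,a,b,c,d],[e,d,c,b,a,f],[f,a,b,c,d,e],[f,e,d,c,b,a]}" if "a' = b" "b' = a"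
  proof -
    have "[a',b',c',d',e',f'] = [b,a,f,e,d,c]"
    proof (rule key)
      show "distinct [b,a,f,e,d,c]" using assms(1) by auto
      show "{{b,a},{a,f},{f,e},{e,d},{d,c},{c,b}} = {{a,b},{b,c},{c,d},{d,e},{e,f},{f,a}}" by (simp add: insert_commute)
    qed (use that in simp)+
    then show ?thesis by simp
  qed
  have k3: "[a',b',c',d',e',f'] \<in> {[a,b,c,d,e,f],[a,f,e,d,c,b],[b,c,d,e,f,a],[b,a,f,e,d,c],[c,d,e,f,a,b],[c,b,a,f,e,d],[d,e,f,a,b,c],[d,c,b,a,f,e],[e,f,a,b,c,d],[e,d,c,b,a,f],[f,a,b,c,d,e],[f,e,d,c,b,a]}" if "a' = b" "b' = c"
  proof -
    have "[a',b',c',d',e',f'] = [b,c,d,e,f,a]"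
    proof (rule key)
      show "distinct [b,c,d,e,f,a]" using assms(1) by auto
      show "{{b,c},{c,d},{d,e},{e,f},{f,a},{a,b}} = {{a,b},{b,c},{c,d},{d,e},{e,f},{f,a}}" by (simp add: insert_commute)
    qed (use that in simp)+
    then show ?thesis by simp
  qed
  have k4: "[a',b',c',d',e',f'] \<in> {[a,b,c,d,e,f],[a,f,e,d,c,b],[b,c,d,e,f,a],[b,a,f,e,d,c],[c,d,e,f,a,b],[c,b,a,f,e,d],[d,e,f,a,b,c],[d,c,b,a,f,e],[e,f,a,b,c,d],[e,d,c,b,a,f],[f,a,b,c,d,e],[f,e,d,c,b,a]}" if "a' = c" "b' = b"
  proof -
    have "[a',b',c',d',e',f'] = [c,b,a,f,e,d]"
    proof (rule key)
      show "distinct [c,b,a,f,e,d]" using assms(1) by auto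
      show "{{c,b},{b,a},{a,f},{f,e},{e,d},{d,c}} = {{a,b},{b,c},{c,d},{d,e},{e,f},{f,a}}" by (simp add: insert_commute)
    qed (use that in simp)+
    then show ?thesis by simp
  qed
  have k5: "[a',b',c',d',e',f'] \<in> {[a,b,c,d,e,f],[a,f,e,d,c,b],[b,c,d,e,f,a],[b,a,f,e,d,c],[c,d,e,f,a,b],[c,b,a,f,e,d],[d,e,f,a,b,c],[d,c,b,a,f,e],[e,f,a,b,c,d],[e,d,c,b,a,f],[f,a,b,c,d,e],[f,e,d,c,b,a]}" if "a' = c" "b' = d"
  proof -
    have "[a',b',c',d',e',f'] = [c,d,e,f,a,b]"
    proof (rule key)
      show "distinct [c,d,e,f,a,b]" using assms(1) by auto
      show "{{c,d},{d,e},{e,f},{f,a},{a,b},{b,c}} = {{a,b},{b,c},{c,d},{d,e},{e,f},{f,a}}" by (simp add: insert_commute)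
    qed (use that in simp)+
    then show ?thesis by simp
  qed
  have k6: "[a',b',c',d',e',f'] \<in> {[a,b,c,d,e,f],[a,f,e,d,c,b],[b,c,d,e,f,a],[b,a,f,e,d,c],[c,d,e,f,a,b],[c,b,a,f,e,d],[d,e,f,a,b,c],[d,c,b,a,f,e],[e,f,a,b,c,d],[e,d,c,b,a,f],[f,a,b,c,d,e],[f,e,d,c,b,a]}" if "a' = d" "b' = c"
  proof -
    have "[a',b',c',d',e',f'] = [d,c,b,a,f,e]"
    proof (rule key)
      show "distinct [d,c,b,a,f,e]" using assms(1) by auto
      show "{{d,c},{c,b},{b,a},{a,f},{f,e},{e,d}} = {{a,b},{b,c},{c,d},{d,e},{e,f},{f,a}}" by (simp add: insert_commute)
    qed (use that in simp)+
    then show ?thesis by simp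
  qed
  have k7: "[a',b',c',d',e',f'] \<in> {[a,b,c,d,e,f],[a,f,e,d,c,b],[b,c,d,e,f,a],[b,a,f,e,d,c],[c,d,e,f,a,b],[c,b,a,f,e,d],[d,e,f,a,b,c],[d,c,b,a,f,e],[e,f,a,b,c,d],[e,d,c,b,a,f],[f,a,b,c,d,e],[f,e,d,c,b,a]}" if "a' = d" "b' = e"
  proof -
    have "[a',b',c',d',e',f'] = [d,e,f,a,b,c]"
    proof (rule key)
      show "distinct [d,e,f,a,b,c]" using assms(1) by auto
      show "{{d,e},{e,f},{f,a},{a,b},{b,c},{c,d}} = {{a,b},{b,c},{c,d},{d,e},{e,f},{f,a}}" by (simp add: insert_commute)
    qed (use that in simp)+
    then show ?thesis by simp
  qed
  have k8: "[a',b',c',d',e',f'] \<in> {[a,b,c,d,e,f],[a,f,e,d,c,b],[b,c,d,e,f,a],[b,a,f,e,d,c],[c,d,e,f,a,b],[c,b,a,f,e,d],[d,e,f,a,b,c],[d,c,b,a,f,e],[e,f,a,b,c,d],[e,d,c,b,a,f],[f,a,b,c,d,e],[f,e,d,c,b,a]}" if "a' = e" "b' = d"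
  proof -
    have "[a',b',c',d',e',f'] = [e,d,c,b,a,f]"
    proof (rule key)
      show "distinct [e,d,c,b,a,f]" using assms(1) by auto
      show "{{e,d},{d,c},{c,b},{b,a},{a,f},{f,e}} = {{a,b},{b,c},{c,d},{d,e},{e,f},{f,a}}" by (simp add: insert_commute)
    qed (use that in simp)+
    then show ?thesis by simp
  qed
  have k9: "[a',b',c',d',e',f'] \<in> {[a,b,c,d,e,f],[a,f,e,d,c,b],[b,c,d,e,f,a],[b,a,f,e,d,c],[c,d,e,f,a,b],[c,b,a,f,e,d],[d,e,f,a,b,c],[d,c,b,a,f,e],[e,f,a,b,c,d],[e,d,c,b,a,f],[f,a,b,c,d,e],[f,e,d,c,b,a]}" if "a' = e" "b' = f"
  proof -
    have "[a',b',c',d',e',f'] = [e,f,a,b,c,d]"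
    proof (rule key)
      show "distinct [e,f,a,b,c,d]" using assms(1) by auto
      show "{{e,f},{f,a},{a,b},{b,c},{c,d},{d,e}} = {{a,b},{b,c},{c,d},{d,e},{e,f},{f,a}}" by (simp add: insert_commute)
    qed (use that in simp)+
    then show ?thesis by simp
  qed
  have k10: "[a',b',c',d',e',f'] \<in> {[a,b,c,d,e,f],[a,f,e,d,c,b],[b,c,d,e,f,a],[b,a,f,e,d,c],[c,d,e,f,a,b],[c,b,a,f,e,d],[d,e,f,a,b,c],[d,c,b,a,f,e],[e,f,a,b,c,d],[e,d,c,b,a,f],[f,a,b,c,d,e],[f,e,d,c,b,a]}" if "a' = f" "b' = e"
  proof -
    have "[a',b',c',d',e',f'] = [f,e,d,c,b,a]"
    proof (rule key)
      show "distinct [f,e,d,c,b,a]" using assms(1) by auto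
      show "{{f,e},{e,d},{d,c},{c,b},{b,a},{a,f}} = {{a,b},{b,c},{c,d},{d,e},{e,f},{f,a}}" by (simp add: insert_commute)
    qed (use that in simp)+
    then show ?thesis by simp
  qed
  have k11: "[a',b',c',d',e',f'] \<in> {[a,b,c,d,e,f],[a,f,e,d,c,b],[b,c,d,e,f,a],[b,a,f,e,d,c],[c,d,e,f,a,b],[c,b,a,f,e,d],[d,e,f,a,b,c],[d,c,b,a,f,e],[e,f,a,b,c,d],[e,d,c,b,a,f],[f,a,b,c,d,e],[f,e,d,c,b,a]}" if "a' = f" "b' = a"
  proof -
    have "[a',b',c',d',e',f'] = [f,a,b,c,d,e]"
    proof (rule key)
      show "distinct [f,a,b,c,d,e]" using assms(1) by auto
      show "{{f,a},{a,b},{b,c},{c,d},{d,e},{e,f}} = {{a,b},{b,c},{c,d},{d,e},{e,f},{f,a}}" by (simp add: insert_commute)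
    qed (use that in simp)+
    then show ?thesis by simp
  qed
  have k12: "[a',b',c',d',e',f'] \<in> {[a,b,c,d,e,f],[a,f,e,d,c,b],[b,c,d,e,f,a],[b,a,f,e,d,c],[c,d,e,f,a,b],[c,b,a,f,e,d],[d,e,f,a,b,c],[d,c,b,a,f,e],[e,f,a,b,c,d],[e,d,c,b,a,f],[f,a,b,c,d,e],[f,e,d,c,b,a]}" if "a' = a" "b' = f"
  proof -
    have "[a',b',c',d',e',f'] = [a,f,e,d,c,b]"
    proof (rule key)
      show "distinct [a,f,e,d,c,b]" using assms(1) by auto
      show "{{a,f},{f,e},{e,d},{d,c},{c,b},{b,a}} = {{a,b},{b,c},{c,d},{d,e},{e,f},{f,a}}" by (simp add: insert_commute)
    qed (use that in simp)+
    then show ?thesis by simp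
  qed
  have "{a',b'} \<in> {{a,b},{b,c},{c,d},{d,e},{e,f},{f,a}}" using assms(3) by (rule subsetD) simp
  then have "(a' = a \<and> b' = b) \<or> (a' = b \<and> b' = a) \<or> (a' = b \<and> b' = c) \<or> (a' = c \<and> b' = b) \<or> (a' = c \<and> b' = d) \<or> (a' = d \<and> b' = c) \<or> (a' = d \<and> b' = e) \<or> (a' = e \<and> b' = d) \<or> (a' = e \<and> b' = f) \<or> (a' = f \<and> b' = e) \<or> (a' = f \<and> b' = a) \<or> (a' = a \<and> b' = f)"
    by (simp add: doubleton_eq_iff)
  then show ?thesis
    apply (elim disjE conjE)
    subgoal by (rule k1)
    subgoal by (rule k2)
    subgoal by (rule k3)
    subgoal by (rule k4)
    subgoal by (rule k5)
    subgoal by (rule k6)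
    subgoal by (rule k7)
    subgoal by (rule k8)
    subgoal by (rule k9)
    subgoal by (rule k10)
    subgoal by (rule k11)
    subgoal by (rule k12)
    done
qed


lemma xor_self_left[simp]: "xor a (xor a b) = (b::nat)"
  by (simp add: xor.assoc[symmetric])

lemma xor_eq0: "xor (a::nat) b = 0 \<longleftrightarrow> a = b"
  by (metis xor.assoc xor.right_neutral xor_self_eq)

lemma xor_eq_iff: "((a::nat) = b) \<longleftrightarrow> xor a b = 0"
  by (simp add: xor_eq0)

lemma xor_lt: "(x::nat) < 2^l \<Longrightarrow> y < 2^l \<Longrightarrow> xor x y < 2^l"
  by (metis take_bit_nat_eq_self_iff take_bit_xor)

lemma len6: "length vs = 6 \<Longrightarrow> \<exists>a b c d e f. vs = [a,b,c,d,e,f]"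
  by (auto simp add: numeral_eq_Suc length_Suc_conv) 

lemma all6: "(\<forall>i<6. P (i::nat)) \<longleftrightarrow> P 0 \<and> P 1 \<and> P 2 \<and> P 3 \<and> P 4 \<and> P 5"
  by (simp add: numeral_eq_Suc All_less_Suc conj_ac)

lemma fiber_count:
  assumes "finite A" "\<And>b. b \<in> f ` A \<Longrightarrow> card {a\<in>A. f a = b} = k"
  shows "card A = k * card (f ` A)"
proof -
  have "A = (\<Union>b\<in>f ` A. {a\<in>A. f a = b})" by auto
  moreover have "card (\<Union>b\<in>f ` A. {a\<in>A. f a = b}) = (\<Sum>b\<in>f ` A. card {a\<in>A. f a = b})"
    by (rule card_UN_disjoint) (use assms(1) in auto)
  ultimately have "card A = (\<Sum>b\<in>f ` A. card {a\<in>A. f a = b})" by simp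
  also have "\<dots> = (\<Sum>b\<in>f ` A. k)" using assms(2) by simp
  finally show ?thesis by simp
qed

lemma tanner_sym: "tanner_adj N H x y = tanner_adj N H y x"
  by (cases x; cases y) (auto simp: tanner_adj_def)

lemma walk6: "is_cycle_walk N H 6 [a,b,c,d,e,f] \<longleftrightarrow> distinct [a,b,c,d,e,f] \<and>
   tanner_adj N H a b \<and> tanner_adj N H b c \<and> tanner_adj N H c d \<and> tanner_adj N H d e \<and>
   tanner_adj N H e f \<and> tanner_adj N H f a"
proof -
  have ce: "cycle_edges [a,b,c,d,e,f] = [{a,b},{b,c},{c,d},{d,e},{e,f},{f,a}]"
    by (simp add: cycle_edges_def upt_rec)
  have dE: "distinct [a,b,c,d,e,f] \<Longrightarrow> distinct [{a,b},{b,c},{c,d},{d,e},{e,f},{f,a}]"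
    apply (simp only: distinct.simps set_simps insert_iff empty_iff de_Morgan_disj doubleton_eq_iff)
    apply (intro conjI)
    apply (simp_all add: eq_commute)
    done
  have idx: "(\<forall>i<6. tanner_adj N H ([a,b,c,d,e,f] ! i) ([a,b,c,d,e,f] ! ((i + 1) mod 6))) \<longleftrightarrow>
   tanner_adj N H a b \<and> tanner_adj N H b c \<and> tanner_adj N H c d \<and> tanner_adj N H d e \<and>
   tanner_adj N H e f \<and> tanner_adj N H f a"
    unfolding all6 by simp
  have len: "length [a,b,c,d,e,f] = 6" "(0::nat) < 6" by simp_all
  show ?thesis unfolding is_cycle_walk_def idx ce using dE len by blast
qed

lemma edges6: "set (cycle_edges [a,b,c,d,e,f]) = {{a,b},{b,c},{c,d},{d,e},{e,f},{f,a}}"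
  by (simp add: cycle_edges_def upt_rec)

locale cyc =
  fixes l \<omega> :: nat and xs :: "nat \<Rightarrow> nat"
  assumes bnd: "\<forall>i<\<omega>. xs i < 2 ^ l"
    and inj: "inj_on xs {..<\<omega>}"
begin

abbreviation "N \<equiv> (2::nat) ^ l"
abbreviation "H \<equiv> sum_perm_mat xs \<omega>"
abbreviation "adj \<equiv> tanner_adj N H"

lemma xs_eq: "u < \<omega> \<Longrightarrow> v < \<omega> \<Longrightarrow> xs u = xs v \<longleftrightarrow> u = v"
  using inj by (auto dest: inj_onD)

lemma H_card: "H r c = card {i\<in>{..<\<omega>}. c = xor r (xs i)}"
  unfolding sum_perm_mat_def perm_mat_def by (simp add: sum.If_cases Int_def)

lemma H_iff: "H r c = 1 \<longleftrightarrow> (\<exists>i<\<omega>. c = xor r (xs i))"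
proof (cases "\<exists>i<\<omega>. c = xor r (xs i)")
  case True
  then obtain i where i: "i < \<omega>" "c = xor r (xs i)" by blast
  have "{j\<in>{..<\<omega>}. c = xor r (xs j)} = {i}"
  proof (intro equalityI subsetI)
    fix j assume j: "j \<in> {j\<in>{..<\<omega>}. c = xor r (xs j)}"
    then have "xs j = xs i" using i by (metis (mono_tags, lifting) mem_Collect_eq xor_self_left)
    then show "j \<in> {i}" using xs_eq i j by auto
  qed (use i in auto)
  then show ?thesis using True unfolding H_card by simp
next
  case False
  then have eq: "{j\<in>{..<\<omega>}. c = xor r (xs j)} = {}" by auto
  show ?thesis using False unfolding H_card eq by simp
qed

lemma adj_LR: "adj (Inl r) (Inr c) \<longleftrightarrow> r < N \<and> c < N \<and> (\<exists>i<\<omega>. c = xor r (xs i))"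
  using H_iff[of r c] by (simp add: tanner_adj_def)
lemma adj_RL: "adj (Inr c) (Inl r) \<longleftrightarrow> r < N \<and> c < N \<and> (\<exists>i<\<omega>. c = xor r (xs i))"
  using H_iff[of r c] by (simp add: tanner_adj_def)
lemma adj_LL: "\<not> adj (Inl r) (Inl r')"
  by (simp add: tanner_adj_def)
lemma adj_RR: "\<not> adj (Inr r) (Inr r')"
  by (simp add: tanner_adj_def)

lemma adj_L: "adj (Inl r) y \<Longrightarrow> \<exists>c. y = Inr c"
  by (cases y) (auto simp: adj_LL)
lemma adj_R: "adj (Inr r) y \<Longrightarrow> \<exists>c. y = Inl c"
  by (cases y) (auto simp: adj_RR)

definition "W0 = {vs. is_cycle_walk N H 6 vs \<and> (\<exists>r. vs ! 0 = Inl r)}"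

lemma W0_form:
  assumes "vs \<in> W0"
  shows "\<exists>r0 c0 r1 c1 r2 c2. vs = [Inl r0, Inr c0, Inl r1, Inr c1, Inl r2, Inr c2]"
proof -
  have w: "is_cycle_walk N H 6 vs" and r: "\<exists>r. vs ! 0 = Inl r" using assms by (auto simp: W0_def)
  obtain a b c d e f where vs: "vs = [a,b,c,d,e,f]" using w len6 unfolding is_cycle_walk_def by blast
  have adjs: "adj a b" "adj b c" "adj c d" "adj d e" "adj e f" using w unfolding vs walk6 by auto
  obtain r0 where a: "a = Inl r0" using r vs by auto
  obtain c0 where b: "b = Inr c0" using adj_L adjs(1) a by blast
  obtain r1 where c: "c = Inl r1" using adj_R adjs(2) b by blast
  obtain c1 where d: "d = Inr c1" using adj_L adjs(3) c by blast
  obtain r2 where e: "e = Inl r2" using adj_R adjs(4) d by blast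
  obtain c2 where f: "f = Inr c2" using adj_L adjs(5) e by blast
  show ?thesis using vs a b c d e f by blast
qed

definition "Rs = {((u, v, w), (u', v', w')).
      u < \<omega> \<and> v < \<omega> \<and> w < \<omega> \<and> u' < \<omega> \<and> v' < \<omega> \<and> w' < \<omega> \<and>
      u \<noteq> v \<and> v \<noteq> w \<and> u' \<noteq> v' \<and> v' \<noteq> w' \<and> u \<noteq> u' \<and> w \<noteq> w' \<and>
      xor (xor (xs u) (xs v)) (xs w) = xor (xor (xs u') (xs v')) (xs w')}"

lemma R_count_eq: "R_count xs \<omega> = card Rs"
  by (simp add: R_count_def Rs_def)

definition phi :: "nat \<times> ((nat\<times>nat\<times>nat)\<times>(nat\<times>nat\<times>nat)) \<Rightarrow> (nat+nat) list" where
"phi = (\<lambda>(r, ((u,v,w),(u',v',w'))). [Inl r, Inr (xor r (xs u)), Inl (xor (xor r (xs u)) (xs v)),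
   Inr (xor (xor (xor r (xs u)) (xs v)) (xs w)), Inl (xor (xor r (xs u')) (xs v')), Inr (xor r (xs u'))])"

lemma neqI: "xor (a::nat) b = c \<Longrightarrow> c \<noteq> 0 \<Longrightarrow> a \<noteq> b"
  by auto

lemma xs_neq: "u < \<omega> \<Longrightarrow> v < \<omega> \<Longrightarrow> u \<noteq> v \<Longrightarrow> xor (xs u) (xs v) \<noteq> 0"
  by (simp add: xor_eq0 xs_eq)

lemmas xac = xor.assoc xor.commute xor.left_commute

lemma phi_in:
  assumes r: "r < N" and t: "((u,v,w),(u',v',w')) \<in> Rs"
  shows "phi (r, ((u,v,w),(u',v',w'))) \<in> W0"
proof -
  have lt: "u < \<omega>" "v < \<omega>" "w < \<omega>" "u' < \<omega>" "v' < \<omega>" "w' < \<omega>"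
   and ne: "u \<noteq> v" "v \<noteq> w" "u' \<noteq> v'" "v' \<noteq> w'" "u \<noteq> u'" "w \<noteq> w'"
   and E: "xor (xor (xs u) (xs v)) (xs w) = xor (xor (xs u') (xs v')) (xs w')"
    using t by (auto simp: Rs_def)
  define a where "a = xs u"
  define b where "b = xs v"
  define c where "c = xs w"
  define a' where "a' = xs u'"
  define b' where "b' = xs v'"
  define c' where "c' = xs w'"
  have E': "xor (xor (xor r a) b) c = xor (xor (xor r a') b') c'"
    using E unfolding a_def b_def c_def a'_def b'_def c'_def by (simp add: xor.assoc)
  have E2: "xor (xor a b) (xor a' b') = xor c c'"
  proof -
    have "xor (xor (xor a b) (xor a' b')) (xor c c') = xor (xor (xor a b) c) (xor (xor a' b') c')"
      by (simp add: xac)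
    also have "\<dots> = 0" using E unfolding a_def b_def c_def a'_def b'_def c'_def by simp
    finally show ?thesis by (simp add: xor_eq0)
  qed
  have bd: "a < N" "b < N" "c < N" "a' < N" "b' < N" "c' < N"
    using bnd lt unfolding a_def b_def c_def a'_def b'_def c'_def by auto
  define r0 where "r0 = r"
  define c0 where "c0 = xor r a"
  define r1 where "r1 = xor (xor r a) b"
  define c1 where "c1 = xor (xor (xor r a) b) c"
  define r2 where "r2 = xor (xor r a') b'"
  define c2 where "c2 = xor r a'"
  have ph: "phi (r, ((u,v,w),(u',v',w'))) = [Inl r0, Inr c0, Inl r1, Inr c1, Inl r2, Inr c2]"
    by (simp add: phi_def r0_def c0_def r1_def c1_def r2_def c2_def a_def b_def c_def a'_def b'_def)
  have c1': "c1 = xor (xor (xor r a') b') c'" using E' c1_def by simp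
  have nab: "xor a b \<noteq> 0" using xs_neq[OF lt(1) lt(2) ne(1)] unfolding a_def b_def .
  have nbc: "xor b c \<noteq> 0" using xs_neq[OF lt(2) lt(3) ne(2)] unfolding b_def c_def .
  have nab': "xor a' b' \<noteq> 0" using xs_neq[OF lt(4) lt(5) ne(3)] unfolding a'_def b'_def .
  have nbc': "xor b' c' \<noteq> 0" using xs_neq[OF lt(5) lt(6) ne(4)] unfolding b'_def c'_def .
  have naa': "xor a a' \<noteq> 0" using xs_neq[OF lt(1) lt(4) ne(5)] unfolding a_def a'_def .
  have ncc': "xor c c' \<noteq> 0" using xs_neq[OF lt(3) lt(6) ne(6)] unfolding c_def c'_def .
  have d1: "r0 \<noteq> r1" by (rule neqI[OF _ nab]) (simp add: r0_def r1_def xac)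
  have d2: "r1 \<noteq> r2" by (rule neqI[OF _ ncc']) (subst E2[symmetric], simp add: r1_def r2_def xac)
  have d3: "r0 \<noteq> r2" by (rule neqI[OF _ nab']) (simp add: r0_def r2_def xac)
  have d4: "c0 \<noteq> c1" by (rule neqI[OF _ nbc]) (simp add: c0_def c1_def xac)
  have d5: "c0 \<noteq> c2" by (rule neqI[OF _ naa']) (simp add: c0_def c2_def xac)
  have d6: "c1 \<noteq> c2" by (rule neqI[OF _ nbc']) (simp add: c1' c2_def xac)
  have dist: "distinct [Inl r0, Inr c0, Inl r1, Inr c1, Inl r2, Inr c2 :: nat + nat]"
    using d1 d2 d3 d4 d5 d6 by auto
  have b0: "r0 < N" "c0 < N" "r1 < N" "c1 < N" "r2 < N" "c2 < N"
    using r bd unfolding r0_def c0_def r1_def c1_def r2_def c2_def by (auto intro!: xor_lt)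
  have a1: "adj (Inl r0) (Inr c0)"
  proof -
    have "c0 = xor r0 (xs u)" by (simp add: c0_def r0_def a_def)
    then show ?thesis unfolding adj_LR using b0 lt(1) by blast
  qed
  have a2: "adj (Inr c0) (Inl r1)"
  proof -
    have "c0 = xor r1 (xs v)" by (simp add: c0_def r1_def b_def xor.assoc)
    then show ?thesis unfolding adj_RL using b0 lt(2) by blast
  qed
  have a3: "adj (Inl r1) (Inr c1)"
  proof -
    have "c1 = xor r1 (xs w)" by (simp add: c1_def r1_def c_def)
    then show ?thesis unfolding adj_LR using b0 lt(3) by blast
  qed
  have a4: "adj (Inr c1) (Inl r2)"
  proof -
    have "c1 = xor r2 (xs w')" by (simp add: c1' r2_def c'_def)
    then show ?thesis unfolding adj_RL using b0 lt(6) by blast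
  qed
  have a5: "adj (Inl r2) (Inr c2)"
  proof -
    have "c2 = xor r2 (xs v')" by (simp add: c2_def r2_def b'_def xor.assoc)
    then show ?thesis unfolding adj_LR using b0 lt(5) by blast
  qed
  have a6: "adj (Inr c2) (Inl r0)"
  proof -
    have "c2 = xor r0 (xs u')" by (simp add: c2_def r0_def a'_def)
    then show ?thesis unfolding adj_RL using b0 lt(4) by blast
  qed
  have "is_cycle_walk N H 6 [Inl r0, Inr c0, Inl r1, Inr c1, Inl r2, Inr c2]"
    unfolding walk6 using dist a1 a2 a3 a4 a5 a6 by blast
  then show ?thesis unfolding ph W0_def by simp
qed

end


lemma xor_cancel: "xor (a::nat) b = xor a c \<longleftrightarrow> b = c"
  by (metis xor_self_left)

lemma xor_swap: "(c::nat) = xor r x \<Longrightarrow> r = xor c x"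
  by (simp add: xor.assoc)

context cyc begin

lemma phi_surj:
  assumes "vs \<in> W0"
  shows "\<exists>r t. r < N \<and> t \<in> Rs \<and> vs = phi (r, t)"
proof -
  obtain r0 c0 r1 c1 r2 c2 where vs: "vs = [Inl r0, Inr c0, Inl r1, Inr c1, Inl r2, Inr c2]"
    using W0_form[OF assms] by blast
  have w: "is_cycle_walk N H 6 vs" using assms by (simp add: W0_def)
  have dist: "distinct [Inl r0, Inr c0, Inl r1, Inr c1, Inl r2, Inr c2 :: nat + nat]"
   and a1: "adj (Inl r0) (Inr c0)" and a2: "adj (Inr c0) (Inl r1)" and a3: "adj (Inl r1) (Inr c1)"
   and a4: "adj (Inr c1) (Inl r2)" and a5: "adj (Inl r2) (Inr c2)" and a6: "adj (Inr c2) (Inl r0)"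
    using w unfolding vs walk6 by blast+
  have dd: "r0 \<noteq> r1" "r0 \<noteq> r2" "r1 \<noteq> r2" "c0 \<noteq> c1" "c0 \<noteq> c2" "c1 \<noteq> c2"
    using dist by auto
  have r0N: "r0 < N" using a1 adj_LR by blast
  obtain u where u: "u < \<omega>" "c0 = xor r0 (xs u)" using a1 adj_LR by blast
  obtain v where v: "v < \<omega>" "c0 = xor r1 (xs v)" using a2 adj_RL by blast
  obtain w where w: "w < \<omega>" "c1 = xor r1 (xs w)" using a3 adj_LR by blast
  obtain w' where w': "w' < \<omega>" "c1 = xor r2 (xs w')" using a4 adj_RL by blast
  obtain v' where v': "v' < \<omega>" "c2 = xor r2 (xs v')" using a5 adj_LR by blast
  obtain u' where u': "u' < \<omega>" "c2 = xor r0 (xs u')" using a6 adj_RL by blast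
  have r1: "r1 = xor (xor r0 (xs u)) (xs v)" using xor_swap[OF v(2)] u(2) by simp
  have r2: "r2 = xor (xor r0 (xs u')) (xs v')" using xor_swap[OF v'(2)] u'(2) by simp
  have c1a: "c1 = xor (xor (xor r0 (xs u)) (xs v)) (xs w)" using w(2) r1 by simp
  have c1b: "c1 = xor (xor (xor r0 (xs u')) (xs v')) (xs w')" using w'(2) r2 by simp
  have E: "xor (xor (xs u) (xs v)) (xs w) = xor (xor (xs u') (xs v')) (xs w')"
    using c1a c1b by (simp add: xor.assoc xor_cancel)
  have n1: "u \<noteq> v" using dd(1) r1 by (auto simp: xor.assoc)
  have n2: "v \<noteq> w" using dd(4) v(2) w(2) by auto
  have n3: "u' \<noteq> v'" using dd(2) r2 by (auto simp: xor.assoc)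
  have n4: "v' \<noteq> w'" using dd(6) v'(2) w'(2) by auto
  have n5: "u \<noteq> u'" using dd(5) u(2) u'(2) by auto
  have n6: "w \<noteq> w'"
  proof
    assume "w = w'"
    then have "xor r1 (xs w) = xor r2 (xs w)" using w(2) w'(2) by simp
    then have "r1 = r2" using xor_swap by (metis xor_swap)
    then show False using dd(3) by simp
  qed
  have t: "((u,v,w),(u',v',w')) \<in> Rs"
    unfolding Rs_def using u(1) v(1) w(1) u'(1) v'(1) w'(1) n1 n2 n3 n4 n5 n6 E by simp
  have "vs = phi (r0, ((u,v,w),(u',v',w')))"
    unfolding vs phi_def using u(2) r1 c1a r2 u'(2) by simp
  then show ?thesis using t r0N by blast
qed

lemma phi_inj: "inj_on phi ({..<N} \<times> Rs)"
proof (rule inj_onI)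
  fix p q assume p: "p \<in> {..<N} \<times> Rs" and q: "q \<in> {..<N} \<times> Rs" and eq: "phi p = phi q"
  obtain r u v w u' v' w' where pp: "p = (r, ((u,v,w),(u',v',w')))" by (metis prod.collapse)
  obtain s x y z x' y' z' where qq: "q = (s, ((x,y,z),(x',y',z')))" by (metis prod.collapse)
  have lt: "u < \<omega>" "v < \<omega>" "w < \<omega>" "u' < \<omega>" "v' < \<omega>" "w' < \<omega>"
     "x < \<omega>" "y < \<omega>" "z < \<omega>" "x' < \<omega>" "y' < \<omega>" "z' < \<omega>"
    using p q unfolding pp qq Rs_def by auto
  have E1: "xor (xor (xs u) (xs v)) (xs w) = xor (xor (xs u') (xs v')) (xs w')"
    using p unfolding pp Rs_def by auto
  have E2: "xor (xor (xs x) (xs y)) (xs z) = xor (xor (xs x') (xs y')) (xs z')"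
    using q unfolding qq Rs_def by auto
  have rs: "r = s" using eq unfolding pp qq phi_def by simp
  have "xor r (xs u) = xor r (xs x)" using eq unfolding pp qq phi_def rs by simp
  then have ux: "u = x" using xs_eq lt xor_cancel by metis
  have "xor (xor r (xs u)) (xs v) = xor (xor r (xs u)) (xs y)" using eq unfolding pp qq phi_def rs ux by simp
  then have vy: "v = y" using xs_eq lt xor_cancel by metis
  have "xor (xor (xor r (xs u)) (xs v)) (xs w) = xor (xor (xor r (xs u)) (xs v)) (xs z)"
    using eq unfolding pp qq phi_def rs ux vy by simp
  then have wz: "w = z" using xs_eq lt xor_cancel by metis
  have "xor r (xs u') = xor r (xs x')" using eq unfolding pp qq phi_def rs by simp
  then have ux': "u' = x'" using xs_eq lt xor_cancel by metis
  have "xor (xor r (xs u')) (xs v') = xor (xor r (xs u')) (xs y')" using eq unfolding pp qq phi_def rs ux' by simp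
  then have vy': "v' = y'" using xs_eq lt xor_cancel by metis
  have "xor (xor (xs u') (xs v')) (xs w') = xor (xor (xs u') (xs v')) (xs z')"
    using E1 E2 unfolding ux vy wz ux' vy' by simp
  then have wz': "w' = z'" using xs_eq lt xor_cancel by metis
  show "p = q" unfolding pp qq rs ux vy wz ux' vy' wz' by simp
qed

lemma W0_eq: "W0 = phi ` ({..<N} \<times> Rs)"
proof
  show "W0 \<subseteq> phi ` ({..<N} \<times> Rs)" using phi_surj by fastforce
  show "phi ` ({..<N} \<times> Rs) \<subseteq> W0" using phi_in by auto
qed

lemma Rs_finite: "finite Rs"
proof -
  have "Rs \<subseteq> ({..<\<omega>} \<times> {..<\<omega>} \<times> {..<\<omega>}) \<times> ({..<\<omega>} \<times> {..<\<omega>} \<times> {..<\<omega>})"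
    unfolding Rs_def by auto
  then show ?thesis by (rule finite_subset) auto
qed

lemma W0_card: "card W0 = N * card Rs"
  unfolding W0_eq using card_image[OF phi_inj] by (simp add: card_cartesian_product)

lemma W0_finite: "finite W0"
  unfolding W0_eq using Rs_finite by simp

end


context cyc begin

abbreviation "Es vs \<equiv> set (cycle_edges vs)"

lemma W0_walk: "vs \<in> W0 \<Longrightarrow> is_cycle_walk N H 6 vs"
  by (simp add: W0_def)

lemma fiber:
  assumes "vs \<in> W0"
  shows "card {ws\<in>W0. Es ws = Es vs} = 6"
proof -
  obtain r0 c0 r1 c1 r2 c2 where vs: "vs = [Inl r0, Inr c0, Inl r1, Inr c1, Inl r2, Inr c2]"
    using W0_form[OF assms] by blast
  define A :: "nat + nat" where "A = Inl r0"
  define B :: "nat + nat" where "B = Inr c0"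
  define C :: "nat + nat" where "C = Inl r1"
  define D :: "nat + nat" where "D = Inr c1"
  define E :: "nat + nat" where "E = Inl r2"
  define F :: "nat + nat" where "F = Inr c2"
  have vs': "vs = [A,B,C,D,E,F]" unfolding vs A_def B_def C_def D_def E_def F_def ..
  have w: "is_cycle_walk N H 6 [A,B,C,D,E,F]" using W0_walk[OF assms] vs' by simp
  have dist: "distinct [A,B,C,D,E,F]" and ad: "adj A B" "adj B C" "adj C D" "adj D E" "adj E F" "adj F A"
    using w unfolding walk6 by blast+
  have ad': "adj B A" "adj C B" "adj D C" "adj E D" "adj F E" "adj A F"
    using ad tanner_sym by blast+
  have EsV: "Es vs = {{A,B},{B,C},{C,D},{D,E},{E,F},{F,A}}" unfolding vs' edges6 ..
  let ?S = "{[A,B,C,D,E,F],[C,D,E,F,A,B],[E,F,A,B,C,D],[A,F,E,D,C,B],[C,B,A,F,E,D],[E,D,C,B,A,F]}"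
  have "{ws\<in>W0. Es ws = Es vs} = ?S"
  proof (intro equalityI subsetI)
    fix ws assume ws: "ws \<in> {ws\<in>W0. Es ws = Es vs}"
    then have ws0: "ws \<in> W0" and eq: "Es ws = Es vs" by auto
    obtain s0 d0 s1 d1 s2 d2 where wsf: "ws = [Inl s0, Inr d0, Inl s1, Inr d1, Inl s2, Inr d2]"
      using W0_form[OF ws0] by blast
    have dw: "distinct [Inl s0, Inr d0, Inl s1, Inr d1, Inl s2, Inr d2 :: nat + nat]"
      using W0_walk[OF ws0] unfolding wsf walk6 by blast
    have sub: "{{Inl s0, Inr d0}, {Inr d0, Inl s1}, {Inl s1, Inr d1}, {Inr d1, Inl s2}, {Inl s2, Inr d2}, {Inr d2, Inl s0}}
       \<subseteq> {{A,B},{B,C},{C,D},{D,E},{E,F},{F,A}}"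
      using eq unfolding wsf EsV edges6 by simp
    have "ws \<in> {[A,B,C,D,E,F],[A,F,E,D,C,B],[B,C,D,E,F,A],[B,A,F,E,D,C],[C,D,E,F,A,B],[C,B,A,F,E,D],[D,E,F,A,B,C],[D,C,B,A,F,E],[E,F,A,B,C,D],[E,D,C,B,A,F],[F,A,B,C,D,E],[F,E,D,C,B,A]}"
      unfolding wsf by (rule dih[OF dist dw sub])
    then show "ws \<in> ?S" unfolding wsf B_def D_def F_def by auto
  next
    fix ws assume "ws \<in> ?S"
    moreover have "[A,B,C,D,E,F] \<in> W0" using w unfolding W0_def A_def by simp
    moreover have "[C,D,E,F,A,B] \<in> W0" unfolding W0_def mem_Collect_eq walk6
      using dist ad ad' by (auto simp: C_def)
    moreover have "[E,F,A,B,C,D] \<in> W0" unfolding W0_def mem_Collect_eq walk6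
      using dist ad ad' by (auto simp: E_def)
    moreover have "[A,F,E,D,C,B] \<in> W0" unfolding W0_def mem_Collect_eq walk6
      using dist ad ad' by (auto simp: A_def)
    moreover have "[C,B,A,F,E,D] \<in> W0" unfolding W0_def mem_Collect_eq walk6
      using dist ad ad' by (auto simp: C_def)
    moreover have "[E,D,C,B,A,F] \<in> W0" unfolding W0_def mem_Collect_eq walk6
      using dist ad ad' by (auto simp: E_def)
    moreover have "Es ws = Es vs" using \<open>ws \<in> ?S\<close> unfolding EsV
      apply (elim insertE emptyE)
      apply (simp_all only: edges6)
      apply (simp_all add: insert_commute)
      done
    ultimately show "ws \<in> {ws\<in>W0. Es ws = Es vs}" by auto
  qed
  moreover have "card ?S = 6" using dist by simp
  ultimately show ?thesis by simp
qed

lemma C_eq: "{set (cycle_edges vs) | vs. is_cycle_walk N H 6 vs} = Es ` W0"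
proof (intro equalityI subsetI)
  fix X assume "X \<in> {set (cycle_edges vs) | vs. is_cycle_walk N H 6 vs}"
  then obtain vs where w: "is_cycle_walk N H 6 vs" and X: "X = Es vs" by blast
  obtain a b c d e f where vs: "vs = [a,b,c,d,e,f]" using w len6 unfolding is_cycle_walk_def by blast
  have dist: "distinct [a,b,c,d,e,f]" and ad: "adj a b" "adj b c" "adj c d" "adj d e" "adj e f" "adj f a"
    using w unfolding vs walk6 by blast+
  show "X \<in> Es ` W0"
  proof (cases a)
    case (Inl r)
    then have "vs \<in> W0" using w vs by (simp add: W0_def)
    then show ?thesis using X by blast
  next
    case (Inr cc)
    then obtain r where b: "b = Inl r" using adj_R ad(1) by blast
    have "[b,c,d,e,f,a] \<in> W0" unfolding W0_def mem_Collect_eq walk6 using dist ad b by auto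
    moreover have "Es [b,c,d,e,f,a] = X" unfolding X vs edges6 by (auto simp: insert_commute)
    ultimately show ?thesis by blast
  qed
next
  fix X assume "X \<in> Es ` W0"
  then show "X \<in> {set (cycle_edges vs) | vs. is_cycle_walk N H 6 vs}" using W0_walk by blast
qed

lemma main_nat: "6 * num_cycles N H 6 = N * R_count xs \<omega>"
proof -
  have "card W0 = 6 * card (Es ` W0)"
    by (rule fiber_count[OF W0_finite]) (use fiber in auto)
  then show ?thesis unfolding num_cycles_def C_eq R_count_eq W0_card[symmetric] by simp
qed

end

theorem mainTheorem13:
  fixes l \<omega> :: nat and xs :: "nat \<Rightarrow> nat"
  assumes "l \<ge> 1"
    and "\<forall>i<\<omega>. xs i < 2 ^ l"
    and "inj_on xs {..<\<omega>}"
  shows "real (num_cycles (2 ^ l) (sum_perm_mat xs \<omega>) 6) = (2 ^ l / 6) * real (R_count xs \<omega>)"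
proof -
  interpret cyc l \<omega> xs using assms(2,3) by unfold_locales
  have "6 * num_cycles (2 ^ l) (sum_perm_mat xs \<omega>) 6 = 2 ^ l * R_count xs \<omega>" by (rule main_nat)
  then have "real (6 * num_cycles (2 ^ l) (sum_perm_mat xs \<omega>) 6) = real (2 ^ l * R_count xs \<omega>)" by simp
  then show ?thesis by simp
qed

end
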